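(* Let $\mathfrak{sp}(2,\mathbb{R})$, the basis $(e_I)_{I=1}^{10}$, the dual left-invariant coframe $(e^I)$ on $\mathbf{Sp}(2,\mathbb{R})$ and the distribution $D_l$ be as in the context. Consider symmetric bilinear forms $g=\sum_{\mu,\nu=1}^{7} g_{\mu\nu}\, e^\mu\odot e^\nu$ on $\mathbf{Sp}(2,\mathbb{R})$ with real constant coefficients $g_{\mu\nu}=g_{\nu\mu}$. Then $\mathcal{L}_X g=0$ for all vector fields $X$ in $D_l$ if and only if $$g=g_{22}(e^2)^2+2g_{24}e^2\odot e^4+g_{44}(e^4)^2+2g_{35}(e^3\odot e^5-e^1\odot e^7)+2g_{26}e^2\odot e^6+2g_{46}e^4 \odot e^6+g_{66}(e^6)^2$$ for some real constants $g_{22},g_{24},g_{44},g_{35},g_{26},g_{46},g_{66}$.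
   Context: Realize $\mathfrak{sp}(2,\mathbb{R})$ as the real $4\times 4$ matrices $$E=\begin{pmatrix} a_5&a_7&a_9&2a_{10}\\ -a_4&a_6&a_8&a_9\\ a_2&a_3&-a_6&-a_7\\ -2a_1&a_2&a_4&-a_5\end{pmatrix},\qquad a_I\in\mathbb{R},$$ with bracket the matrix commutator and basis $E_I=\partial E/\partial a_I$, $I=1,\dots,10$. Put $e_1=E_2,\ e_2=E_3,\ e_3=E_4,\ e_4=E_6,\ e_5=E_7,\ e_6=E_8,\ e_7=E_9,\ e_8=E_1,\ e_9=E_5,\ e_{10}=E_{10}$, regarded as left-invariant vector fields on $\mathbf{Sp}(2,\mathbb{R})$, and let $(e^I)$ be the dual left-invariant 1-forms ($e_I\lrcorner e^J=\delta^J_I$). They satisfy ${\rm d} e^1=-e^1\wedge(e^4+e^9)+e^2\wedge e^3-2e^5\wedge e^8$, ${\rm d} e^2=-2e^1\wedge e^5-2e^2\wedge e^4$, ${\rm d} e^3=-e^1\wedge e^6+e^3\wedge(e^4-e^9)-2e^7\wedge e^8$, ${\rm d} e^4=e^1\wedge e^7+e^2\wedge e^6+e^3\wedge e^5$, ${\rm d} e^5=2e^1\wedge e^{10}+e^2\wedge e^7+e^5\wedge (e^9-e^4)$, ${\rm d} e^6=2e^3\wedge e^7-2e^4\wedge e^6$, ${\rm d} e^7=2e^3\wedge e^{10}-e^5\wedge e^6+e^7\wedge (e^4+e^9)$, ${\rm d} e^8=-e^1\wedge e^3-2e^8\wedge e^9$, ${\rm d} e^9=e^1\wedge e^7-e^3\wedge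 e^5-4e^8\wedge e^{10}$, ${\rm d} e^{10}=-e^5\wedge e^7-2e^9\wedge e^{10}$. $D_l$ is the (integrable) rank-3 distribution on $\mathbf{Sp}(2,\mathbb{R})$ spanned by $e_8,e_9,e_{10}$, i.e. the annihilator of $e^1,\dots,e^7$; its leaves are the cosets of the subgroup $\mathbf{SL}(2,\mathbb{R})_l$ with Lie algebra $\mathrm{Span}(E_1,E_5,E_{10})$. Notation: $e^I\odot e^J=\tfrac12(e^I\otimes e^J+e^J\otimes e^I)$, $(e^I)^2=e^I\odot e^I$. *)

theory Defs
  imports "HOL-Analysis.Analysis"
begin

text \<open>A 4x4 real matrix from its entries indexed by rows/columns 1..4 (paper convention);
  row r of the paper corresponds to the index (of_nat r :: 4).\<close>
definition mk44 :: "(nat \<Rightarrow> nat \<Rightarrow> real) \<Rightarrow> real^4^4" where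
  "mk44 M = (\<chi> i j. \<Sum>r\<in>{1..4}. \<Sum>c\<in>{1..4}.
      (if i = of_nat r \<and> j = of_nat c then M r c else 0))"

definition spE :: "(nat \<Rightarrow> real) \<Rightarrow> real^4^4" where
  "spE a = mk44 (\<lambda>r c. [[a 5, a 7, a 9, 2 * a 10],
                         [- a 4, a 6, a 8, a 9],
                         [a 2, a 3, - a 6, - a 7],
                         [- 2 * a 1, a 2, a 4, - a 5]] ! (r - 1) ! (c - 1))"

definition EE :: "nat \<Rightarrow> real^4^4" where
  "EE I = spE (\<lambda>K. if K = I then 1 else 0)"

definition ent :: "real^4^4 \<Rightarrow> nat \<Rightarrow> nat \<Rightarrow> real" where
  "ent M r c = M $ of_nat r $ of_nat c"

text \<open>The coordinate a_K of an element of sp(2,R) (dual basis to E_I).\<close>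
definition acoord :: "nat \<Rightarrow> real^4^4 \<Rightarrow> real" where
  "acoord K M = (if K = 1 then - ent M 4 1 / 2
            else if K = 2 then ent M 3 1
            else if K = 3 then ent M 3 2
            else if K = 4 then ent M 4 3
            else if K = 5 then ent M 1 1
            else if K = 6 then ent M 2 2
            else if K = 7 then ent M 1 2
            else if K = 8 then ent M 2 3
            else if K = 9 then ent M 1 3
            else if K = 10 then ent M 1 4 / 2 else 0)"

definition sig :: "nat \<Rightarrow> nat" where
  "sig I = [2, 3, 4, 6, 7, 8, 9, 1, 5, 10] ! (I - 1)"

definition ebasis :: "nat \<Rightarrow> real^4^4" where
  "ebasis I = EE (sig I)"

definition ecoord :: "nat \<Rightarrow> real^4^4 \<Rightarrow> real" where
  "ecoord K M = acoord (sig K) M"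

definition strc :: "nat \<Rightarrow> nat \<Rightarrow> nat \<Rightarrow> real" where
  "strc I J K = ecoord K (ebasis I ** ebasis J - ebasis J ** ebasis I)"

text \<open>The symplectic form preserved by the group (its Lie algebra is exactly the set of E(a)).\<close>
definition Jsp :: "real^4^4" where
  "Jsp = mk44 (\<lambda>r c. [[0, 0, 0, 1], [0, 0, 1, 0], [0, -1, 0, 0], [-1, 0, 0, 0]] ! (r - 1) ! (c - 1))"

definition Sp2 :: "(real^4^4) set" where
  "Sp2 = {A. transpose A ** Jsp ** A = Jsp}"

text \<open>A vector field on Sp(2,R) is written X = sum_{I=1}^{10} x_I e_I with coefficient
  functions x_I (x :: nat => matrix => real); smooth functions on the closed submanifold
  Sp(2,R) are represented by (differentiable) functions on the ambient matrix space.\<close>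

definition vfield :: "(nat \<Rightarrow> real^4^4 \<Rightarrow> real) \<Rightarrow> bool" where
  "vfield x \<longleftrightarrow> (\<forall>I A. x I differentiable (at A))"

text \<open>Derivative of a function along the left-invariant field e_I at A: direction A * e_I.\<close>
definition eder :: "nat \<Rightarrow> (real^4^4 \<Rightarrow> real) \<Rightarrow> real^4^4 \<Rightarrow> real" where
  "eder I f A = frechet_derivative f (at A) (A ** ebasis I)"

definition vf_apply :: "(nat \<Rightarrow> real^4^4 \<Rightarrow> real) \<Rightarrow> (real^4^4 \<Rightarrow> real) \<Rightarrow> real^4^4 \<Rightarrow> real" where
  "vf_apply x f A = (\<Sum>I\<in>{1..10}. x I A * eder I f A)"

definition vf_bracket :: "(nat \<Rightarrow> real^4^4 \<Rightarrow> real) \<Rightarrow> (nat \<Rightarrow> real^4^4 \<Rightarrow> real)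
    \<Rightarrow> nat \<Rightarrow> real^4^4 \<Rightarrow> real" where
  "vf_bracket x y K A =
     (\<Sum>I\<in>{1..10}. x I A * eder I (y K) A - y I A * eder I (x K) A)
     + (\<Sum>I\<in>{1..10}. \<Sum>J\<in>{1..10}. x I A * y J A * strc I J K)"

text \<open>X lies in D_l = span(e_8, e_9, e_10): its e_1..e_7 components vanish.\<close>
definition in_Dl :: "(nat \<Rightarrow> real^4^4 \<Rightarrow> real) \<Rightarrow> bool" where
  "in_Dl x \<longleftrightarrow> (\<forall>I\<in>{1..7}. \<forall>A. x I A = 0)"

definition odot :: "nat \<Rightarrow> nat \<Rightarrow> (nat \<Rightarrow> real) \<Rightarrow> (nat \<Rightarrow> real) \<Rightarrow> real" where
  "odot I J v w = (v I * w J + v J * w I) / 2"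

definition symform :: "(nat \<Rightarrow> nat \<Rightarrow> real) \<Rightarrow> (nat \<Rightarrow> real) \<Rightarrow> (nat \<Rightarrow> real) \<Rightarrow> real" where
  "symform gc v w = (\<Sum>\<mu>\<in>{1..7}. \<Sum>\<nu>\<in>{1..7}. gc \<mu> \<nu> * odot \<mu> \<nu> v w)"

definition gvf :: "(nat \<Rightarrow> nat \<Rightarrow> real) \<Rightarrow> (nat \<Rightarrow> real^4^4 \<Rightarrow> real) \<Rightarrow> (nat \<Rightarrow> real^4^4 \<Rightarrow> real)
    \<Rightarrow> real^4^4 \<Rightarrow> real" where
  "gvf gc y z A = symform gc (\<lambda>I. y I A) (\<lambda>I. z I A)"

definition lie_deriv :: "(nat \<Rightarrow> nat \<Rightarrow> real) \<Rightarrow> (nat \<Rightarrow> real^4^4 \<Rightarrow> real)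
    \<Rightarrow> (nat \<Rightarrow> real^4^4 \<Rightarrow> real) \<Rightarrow> (nat \<Rightarrow> real^4^4 \<Rightarrow> real) \<Rightarrow> real^4^4 \<Rightarrow> real" where
  "lie_deriv gc x y z A =
     vf_apply x (gvf gc y z) A - gvf gc (vf_bracket x y) z A - gvf gc y (vf_bracket x z) A"

end

theory Submission
  imports Defs
begin


lemma ent_mult: "ent (A ** B) r c = (\<Sum>k\<in>{1..4}. ent A r k * ent B k c)"
  unfolding ent_def matrix_matrix_mult_def
  by (simp add: sum_4 eval_nat_numeral)

lemma ent_diff: "ent (A - B) r c = ent A r c - ent B r c"
  unfolding ent_def by simp

lemma ten: "{1..10::nat} = {1,2,3,4,5,6,7,8,9,10}" by (rule set_eqI) (simp; arith)
lemma seven: "{1..7::nat} = {1,2,3,4,5,6,7}" by (rule set_eqI) (simp; arith)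

lemmas strc_u = strc_def ecoord_def acoord_def sig_def ent_diff ent_mult
lemmas strc_simps = ebasis_def sig_def EE_def spE_def ent_def mk44_def eval_nat_numeral

lemma eb_1_1_1 [simp]: "ent (ebasis (Suc 0)) (Suc 0) (Suc 0) = 0" by (simp add: strc_simps)
lemma eb_1_1_2 [simp]: "ent (ebasis (Suc 0)) (Suc 0) 2 = 0" by (simp add: strc_simps)
lemma eb_1_1_3 [simp]: "ent (ebasis (Suc 0)) (Suc 0) 3 = 0" by (simp add: strc_simps)
lemma eb_1_1_4 [simp]: "ent (ebasis (Suc 0)) (Suc 0) 4 = 0" by (simp add: strc_simps)
lemma eb_1_2_1 [simp]: "ent (ebasis (Suc 0)) 2 (Suc 0) = 0" by (simp add: strc_simps)
lemma eb_1_2_2 [simp]: "ent (ebasis (Suc 0)) 2 2 = 0" by (simp add: strc_simps)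
lemma eb_1_2_3 [simp]: "ent (ebasis (Suc 0)) 2 3 = 0" by (simp add: strc_simps)
lemma eb_1_2_4 [simp]: "ent (ebasis (Suc 0)) 2 4 = 0" by (simp add: strc_simps)
lemma eb_1_3_1 [simp]: "ent (ebasis (Suc 0)) 3 (Suc 0) = 1" by (simp add: strc_simps)
lemma eb_1_3_2 [simp]: "ent (ebasis (Suc 0)) 3 2 = 0" by (simp add: strc_simps)
lemma eb_1_3_3 [simp]: "ent (ebasis (Suc 0)) 3 3 = 0" by (simp add: strc_simps)
lemma eb_1_3_4 [simp]: "ent (ebasis (Suc 0)) 3 4 = 0" by (simp add: strc_simps)
lemma eb_1_4_1 [simp]: "ent (ebasis (Suc 0)) 4 (Suc 0) = 0" by (simp add: strc_simps)
lemma eb_1_4_2 [simp]: "ent (ebasis (Suc 0)) 4 2 = 1" by (simp add: strc_simps)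
lemma eb_1_4_3 [simp]: "ent (ebasis (Suc 0)) 4 3 = 0" by (simp add: strc_simps)
lemma eb_1_4_4 [simp]: "ent (ebasis (Suc 0)) 4 4 = 0" by (simp add: strc_simps)
lemma eb_2_1_1 [simp]: "ent (ebasis 2) (Suc 0) (Suc 0) = 0" by (simp add: strc_simps)
lemma eb_2_1_2 [simp]: "ent (ebasis 2) (Suc 0) 2 = 0" by (simp add: strc_simps)
lemma eb_2_1_3 [simp]: "ent (ebasis 2) (Suc 0) 3 = 0" by (simp add: strc_simps)
lemma eb_2_1_4 [simp]: "ent (ebasis 2) (Suc 0) 4 = 0" by (simp add: strc_simps)
lemma eb_2_2_1 [simp]: "ent (ebasis 2) 2 (Suc 0) = 0" by (simp add: strc_simps)
lemma eb_2_2_2 [simp]: "ent (ebasis 2) 2 2 = 0" by (simp add: strc_simps)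
lemma eb_2_2_3 [simp]: "ent (ebasis 2) 2 3 = 0" by (simp add: strc_simps)
lemma eb_2_2_4 [simp]: "ent (ebasis 2) 2 4 = 0" by (simp add: strc_simps)
lemma eb_2_3_1 [simp]: "ent (ebasis 2) 3 (Suc 0) = 0" by (simp add: strc_simps)
lemma eb_2_3_2 [simp]: "ent (ebasis 2) 3 2 = 1" by (simp add: strc_simps)
lemma eb_2_3_3 [simp]: "ent (ebasis 2) 3 3 = 0" by (simp add: strc_simps)
lemma eb_2_3_4 [simp]: "ent (ebasis 2) 3 4 = 0" by (simp add: strc_simps)
lemma eb_2_4_1 [simp]: "ent (ebasis 2) 4 (Suc 0) = 0" by (simp add: strc_simps)
lemma eb_2_4_2 [simp]: "ent (ebasis 2) 4 2 = 0" by (simp add: strc_simps)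
lemma eb_2_4_3 [simp]: "ent (ebasis 2) 4 3 = 0" by (simp add: strc_simps)
lemma eb_2_4_4 [simp]: "ent (ebasis 2) 4 4 = 0" by (simp add: strc_simps)
lemma eb_3_1_1 [simp]: "ent (ebasis 3) (Suc 0) (Suc 0) = 0" by (simp add: strc_simps)
lemma eb_3_1_2 [simp]: "ent (ebasis 3) (Suc 0) 2 = 0" by (simp add: strc_simps)
lemma eb_3_1_3 [simp]: "ent (ebasis 3) (Suc 0) 3 = 0" by (simp add: strc_simps)
lemma eb_3_1_4 [simp]: "ent (ebasis 3) (Suc 0) 4 = 0" by (simp add: strc_simps)
lemma eb_3_2_1 [simp]: "ent (ebasis 3) 2 (Suc 0) = -1" by (simp add: strc_simps)
lemma eb_3_2_2 [simp]: "ent (ebasis 3) 2 2 = 0" by (simp add: strc_simps)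
lemma eb_3_2_3 [simp]: "ent (ebasis 3) 2 3 = 0" by (simp add: strc_simps)
lemma eb_3_2_4 [simp]: "ent (ebasis 3) 2 4 = 0" by (simp add: strc_simps)
lemma eb_3_3_1 [simp]: "ent (ebasis 3) 3 (Suc 0) = 0" by (simp add: strc_simps)
lemma eb_3_3_2 [simp]: "ent (ebasis 3) 3 2 = 0" by (simp add: strc_simps)
lemma eb_3_3_3 [simp]: "ent (ebasis 3) 3 3 = 0" by (simp add: strc_simps)
lemma eb_3_3_4 [simp]: "ent (ebasis 3) 3 4 = 0" by (simp add: strc_simps)
lemma eb_3_4_1 [simp]: "ent (ebasis 3) 4 (Suc 0) = 0" by (simp add: strc_simps)
lemma eb_3_4_2 [simp]: "ent (ebasis 3) 4 2 = 0" by (simp add: strc_simps)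
lemma eb_3_4_3 [simp]: "ent (ebasis 3) 4 3 = 1" by (simp add: strc_simps)
lemma eb_3_4_4 [simp]: "ent (ebasis 3) 4 4 = 0" by (simp add: strc_simps)
lemma eb_4_1_1 [simp]: "ent (ebasis 4) (Suc 0) (Suc 0) = 0" by (simp add: strc_simps)
lemma eb_4_1_2 [simp]: "ent (ebasis 4) (Suc 0) 2 = 0" by (simp add: strc_simps)
lemma eb_4_1_3 [simp]: "ent (ebasis 4) (Suc 0) 3 = 0" by (simp add: strc_simps)
lemma eb_4_1_4 [simp]: "ent (ebasis 4) (Suc 0) 4 = 0" by (simp add: strc_simps)
lemma eb_4_2_1 [simp]: "ent (ebasis 4) 2 (Suc 0) = 0" by (simp add: strc_simps)
lemma eb_4_2_2 [simp]: "ent (ebasis 4) 2 2 = 1" by (simp add: strc_simps)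
lemma eb_4_2_3 [simp]: "ent (ebasis 4) 2 3 = 0" by (simp add: strc_simps)
lemma eb_4_2_4 [simp]: "ent (ebasis 4) 2 4 = 0" by (simp add: strc_simps)
lemma eb_4_3_1 [simp]: "ent (ebasis 4) 3 (Suc 0) = 0" by (simp add: strc_simps)
lemma eb_4_3_2 [simp]: "ent (ebasis 4) 3 2 = 0" by (simp add: strc_simps)
lemma eb_4_3_3 [simp]: "ent (ebasis 4) 3 3 = -1" by (simp add: strc_simps)
lemma eb_4_3_4 [simp]: "ent (ebasis 4) 3 4 = 0" by (simp add: strc_simps)
lemma eb_4_4_1 [simp]: "ent (ebasis 4) 4 (Suc 0) = 0" by (simp add: strc_simps)
lemma eb_4_4_2 [simp]: "ent (ebasis 4) 4 2 = 0" by (simp add: strc_simps)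
lemma eb_4_4_3 [simp]: "ent (ebasis 4) 4 3 = 0" by (simp add: strc_simps)
lemma eb_4_4_4 [simp]: "ent (ebasis 4) 4 4 = 0" by (simp add: strc_simps)
lemma eb_5_1_1 [simp]: "ent (ebasis 5) (Suc 0) (Suc 0) = 0" by (simp add: strc_simps)
lemma eb_5_1_2 [simp]: "ent (ebasis 5) (Suc 0) 2 = 1" by (simp add: strc_simps)
lemma eb_5_1_3 [simp]: "ent (ebasis 5) (Suc 0) 3 = 0" by (simp add: strc_simps)
lemma eb_5_1_4 [simp]: "ent (ebasis 5) (Suc 0) 4 = 0" by (simp add: strc_simps)
lemma eb_5_2_1 [simp]: "ent (ebasis 5) 2 (Suc 0) = 0" by (simp add: strc_simps)
lemma eb_5_2_2 [simp]: "ent (ebasis 5) 2 2 = 0" by (simp add: strc_simps)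
lemma eb_5_2_3 [simp]: "ent (ebasis 5) 2 3 = 0" by (simp add: strc_simps)
lemma eb_5_2_4 [simp]: "ent (ebasis 5) 2 4 = 0" by (simp add: strc_simps)
lemma eb_5_3_1 [simp]: "ent (ebasis 5) 3 (Suc 0) = 0" by (simp add: strc_simps)
lemma eb_5_3_2 [simp]: "ent (ebasis 5) 3 2 = 0" by (simp add: strc_simps)
lemma eb_5_3_3 [simp]: "ent (ebasis 5) 3 3 = 0" by (simp add: strc_simps)
lemma eb_5_3_4 [simp]: "ent (ebasis 5) 3 4 = -1" by (simp add: strc_simps)
lemma eb_5_4_1 [simp]: "ent (ebasis 5) 4 (Suc 0) = 0" by (simp add: strc_simps)
lemma eb_5_4_2 [simp]: "ent (ebasis 5) 4 2 = 0" by (simp add: strc_simps)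
lemma eb_5_4_3 [simp]: "ent (ebasis 5) 4 3 = 0" by (simp add: strc_simps)
lemma eb_5_4_4 [simp]: "ent (ebasis 5) 4 4 = 0" by (simp add: strc_simps)
lemma eb_6_1_1 [simp]: "ent (ebasis 6) (Suc 0) (Suc 0) = 0" by (simp add: strc_simps)
lemma eb_6_1_2 [simp]: "ent (ebasis 6) (Suc 0) 2 = 0" by (simp add: strc_simps)
lemma eb_6_1_3 [simp]: "ent (ebasis 6) (Suc 0) 3 = 0" by (simp add: strc_simps)
lemma eb_6_1_4 [simp]: "ent (ebasis 6) (Suc 0) 4 = 0" by (simp add: strc_simps)
lemma eb_6_2_1 [simp]: "ent (ebasis 6) 2 (Suc 0) = 0" by (simp add: strc_simps)
lemma eb_6_2_2 [simp]: "ent (ebasis 6) 2 2 = 0" by (simp add: strc_simps)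
lemma eb_6_2_3 [simp]: "ent (ebasis 6) 2 3 = 1" by (simp add: strc_simps)
lemma eb_6_2_4 [simp]: "ent (ebasis 6) 2 4 = 0" by (simp add: strc_simps)
lemma eb_6_3_1 [simp]: "ent (ebasis 6) 3 (Suc 0) = 0" by (simp add: strc_simps)
lemma eb_6_3_2 [simp]: "ent (ebasis 6) 3 2 = 0" by (simp add: strc_simps)
lemma eb_6_3_3 [simp]: "ent (ebasis 6) 3 3 = 0" by (simp add: strc_simps)
lemma eb_6_3_4 [simp]: "ent (ebasis 6) 3 4 = 0" by (simp add: strc_simps)
lemma eb_6_4_1 [simp]: "ent (ebasis 6) 4 (Suc 0) = 0" by (simp add: strc_simps)
lemma eb_6_4_2 [simp]: "ent (ebasis 6) 4 2 = 0" by (simp add: strc_simps)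
lemma eb_6_4_3 [simp]: "ent (ebasis 6) 4 3 = 0" by (simp add: strc_simps)
lemma eb_6_4_4 [simp]: "ent (ebasis 6) 4 4 = 0" by (simp add: strc_simps)
lemma eb_7_1_1 [simp]: "ent (ebasis 7) (Suc 0) (Suc 0) = 0" by (simp add: strc_simps)
lemma eb_7_1_2 [simp]: "ent (ebasis 7) (Suc 0) 2 = 0" by (simp add: strc_simps)
lemma eb_7_1_3 [simp]: "ent (ebasis 7) (Suc 0) 3 = 1" by (simp add: strc_simps)
lemma eb_7_1_4 [simp]: "ent (ebasis 7) (Suc 0) 4 = 0" by (simp add: strc_simps)
lemma eb_7_2_1 [simp]: "ent (ebasis 7) 2 (Suc 0) = 0" by (simp add: strc_simps)
lemma eb_7_2_2 [simp]: "ent (ebasis 7) 2 2 = 0" by (simp add: strc_simps)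
lemma eb_7_2_3 [simp]: "ent (ebasis 7) 2 3 = 0" by (simp add: strc_simps)
lemma eb_7_2_4 [simp]: "ent (ebasis 7) 2 4 = 1" by (simp add: strc_simps)
lemma eb_7_3_1 [simp]: "ent (ebasis 7) 3 (Suc 0) = 0" by (simp add: strc_simps)
lemma eb_7_3_2 [simp]: "ent (ebasis 7) 3 2 = 0" by (simp add: strc_simps)
lemma eb_7_3_3 [simp]: "ent (ebasis 7) 3 3 = 0" by (simp add: strc_simps)
lemma eb_7_3_4 [simp]: "ent (ebasis 7) 3 4 = 0" by (simp add: strc_simps)
lemma eb_7_4_1 [simp]: "ent (ebasis 7) 4 (Suc 0) = 0" by (simp add: strc_simps)
lemma eb_7_4_2 [simp]: "ent (ebasis 7) 4 2 = 0" by (simp add: strc_simps)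
lemma eb_7_4_3 [simp]: "ent (ebasis 7) 4 3 = 0" by (simp add: strc_simps)
lemma eb_7_4_4 [simp]: "ent (ebasis 7) 4 4 = 0" by (simp add: strc_simps)
lemma eb_8_1_1 [simp]: "ent (ebasis 8) (Suc 0) (Suc 0) = 0" by (simp add: strc_simps)
lemma eb_8_1_2 [simp]: "ent (ebasis 8) (Suc 0) 2 = 0" by (simp add: strc_simps)
lemma eb_8_1_3 [simp]: "ent (ebasis 8) (Suc 0) 3 = 0" by (simp add: strc_simps)
lemma eb_8_1_4 [simp]: "ent (ebasis 8) (Suc 0) 4 = 0" by (simp add: strc_simps)
lemma eb_8_2_1 [simp]: "ent (ebasis 8) 2 (Suc 0) = 0" by (simp add: strc_simps)
lemma eb_8_2_2 [simp]: "ent (ebasis 8) 2 2 = 0" by (simp add: strc_simps)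
lemma eb_8_2_3 [simp]: "ent (ebasis 8) 2 3 = 0" by (simp add: strc_simps)
lemma eb_8_2_4 [simp]: "ent (ebasis 8) 2 4 = 0" by (simp add: strc_simps)
lemma eb_8_3_1 [simp]: "ent (ebasis 8) 3 (Suc 0) = 0" by (simp add: strc_simps)
lemma eb_8_3_2 [simp]: "ent (ebasis 8) 3 2 = 0" by (simp add: strc_simps)
lemma eb_8_3_3 [simp]: "ent (ebasis 8) 3 3 = 0" by (simp add: strc_simps)
lemma eb_8_3_4 [simp]: "ent (ebasis 8) 3 4 = 0" by (simp add: strc_simps)
lemma eb_8_4_1 [simp]: "ent (ebasis 8) 4 (Suc 0) = -2" by (simp add: strc_simps)
lemma eb_8_4_2 [simp]: "ent (ebasis 8) 4 2 = 0" by (simp add: strc_simps)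
lemma eb_8_4_3 [simp]: "ent (ebasis 8) 4 3 = 0" by (simp add: strc_simps)
lemma eb_8_4_4 [simp]: "ent (ebasis 8) 4 4 = 0" by (simp add: strc_simps)
lemma eb_9_1_1 [simp]: "ent (ebasis 9) (Suc 0) (Suc 0) = 1" by (simp add: strc_simps)
lemma eb_9_1_2 [simp]: "ent (ebasis 9) (Suc 0) 2 = 0" by (simp add: strc_simps)
lemma eb_9_1_3 [simp]: "ent (ebasis 9) (Suc 0) 3 = 0" by (simp add: strc_simps)
lemma eb_9_1_4 [simp]: "ent (ebasis 9) (Suc 0) 4 = 0" by (simp add: strc_simps)
lemma eb_9_2_1 [simp]: "ent (ebasis 9) 2 (Suc 0) = 0" by (simp add: strc_simps)
lemma eb_9_2_2 [simp]: "ent (ebasis 9) 2 2 = 0" by (simp add: strc_simps)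
lemma eb_9_2_3 [simp]: "ent (ebasis 9) 2 3 = 0" by (simp add: strc_simps)
lemma eb_9_2_4 [simp]: "ent (ebasis 9) 2 4 = 0" by (simp add: strc_simps)
lemma eb_9_3_1 [simp]: "ent (ebasis 9) 3 (Suc 0) = 0" by (simp add: strc_simps)
lemma eb_9_3_2 [simp]: "ent (ebasis 9) 3 2 = 0" by (simp add: strc_simps)
lemma eb_9_3_3 [simp]: "ent (ebasis 9) 3 3 = 0" by (simp add: strc_simps)
lemma eb_9_3_4 [simp]: "ent (ebasis 9) 3 4 = 0" by (simp add: strc_simps)
lemma eb_9_4_1 [simp]: "ent (ebasis 9) 4 (Suc 0) = 0" by (simp add: strc_simps)
lemma eb_9_4_2 [simp]: "ent (ebasis 9) 4 2 = 0" by (simp add: strc_simps)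
lemma eb_9_4_3 [simp]: "ent (ebasis 9) 4 3 = 0" by (simp add: strc_simps)
lemma eb_9_4_4 [simp]: "ent (ebasis 9) 4 4 = -1" by (simp add: strc_simps)
lemma eb_10_1_1 [simp]: "ent (ebasis 10) (Suc 0) (Suc 0) = 0" by (simp add: strc_simps)
lemma eb_10_1_2 [simp]: "ent (ebasis 10) (Suc 0) 2 = 0" by (simp add: strc_simps)
lemma eb_10_1_3 [simp]: "ent (ebasis 10) (Suc 0) 3 = 0" by (simp add: strc_simps)
lemma eb_10_1_4 [simp]: "ent (ebasis 10) (Suc 0) 4 = 2" by (simp add: strc_simps)
lemma eb_10_2_1 [simp]: "ent (ebasis 10) 2 (Suc 0) = 0" by (simp add: strc_simps)
lemma eb_10_2_2 [simp]: "ent (ebasis 10) 2 2 = 0" by (simp add: strc_simps)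
lemma eb_10_2_3 [simp]: "ent (ebasis 10) 2 3 = 0" by (simp add: strc_simps)
lemma eb_10_2_4 [simp]: "ent (ebasis 10) 2 4 = 0" by (simp add: strc_simps)
lemma eb_10_3_1 [simp]: "ent (ebasis 10) 3 (Suc 0) = 0" by (simp add: strc_simps)
lemma eb_10_3_2 [simp]: "ent (ebasis 10) 3 2 = 0" by (simp add: strc_simps)
lemma eb_10_3_3 [simp]: "ent (ebasis 10) 3 3 = 0" by (simp add: strc_simps)
lemma eb_10_3_4 [simp]: "ent (ebasis 10) 3 4 = 0" by (simp add: strc_simps)
lemma eb_10_4_1 [simp]: "ent (ebasis 10) 4 (Suc 0) = 0" by (simp add: strc_simps)
lemma eb_10_4_2 [simp]: "ent (ebasis 10) 4 2 = 0" by (simp add: strc_simps)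
lemma eb_10_4_3 [simp]: "ent (ebasis 10) 4 3 = 0" by (simp add: strc_simps)
lemma eb_10_4_4 [simp]: "ent (ebasis 10) 4 4 = 0" by (simp add: strc_simps)
lemma four: "{1..4::nat} = {1,2,3,4}" by (rule set_eqI) (simp; arith)
lemma [simp]: "strc 8 1 1 = 0" unfolding strc_u four by simp
lemma [simp]: "strc 8 (Suc 0) (Suc 0) = 0" unfolding strc_u four by simp
lemma [simp]: "strc 8 1 2 = 0" unfolding strc_u four by simp
lemma [simp]: "strc 8 (Suc 0) 2 = 0" unfolding strc_u four by simp
lemma [simp]: "strc 8 1 3 = 0" unfolding strc_u four by simp
lemma [simp]: "strc 8 (Suc 0) 3 = 0" unfolding strc_u four by simp
lemma [simp]: "strc 8 1 4 = 0" unfolding strc_u four by simp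
lemma [simp]: "strc 8 (Suc 0) 4 = 0" unfolding strc_u four by simp
lemma [simp]: "strc 8 1 5 = 0" unfolding strc_u four by simp
lemma [simp]: "strc 8 (Suc 0) 5 = 0" unfolding strc_u four by simp
lemma [simp]: "strc 8 1 6 = 0" unfolding strc_u four by simp
lemma [simp]: "strc 8 (Suc 0) 6 = 0" unfolding strc_u four by simp
lemma [simp]: "strc 8 1 7 = 0" unfolding strc_u four by simp
lemma [simp]: "strc 8 (Suc 0) 7 = 0" unfolding strc_u four by simp
lemma [simp]: "strc 8 2 1 = 0" unfolding strc_u four by simp
lemma [simp]: "strc 8 2 (Suc 0) = 0" unfolding strc_u four by simp
lemma [simp]: "strc 8 2 2 = 0" unfolding strc_u four by simp
lemma [simp]: "strc 8 2 3 = 0" unfolding strc_u four by simp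
lemma [simp]: "strc 8 2 4 = 0" unfolding strc_u four by simp
lemma [simp]: "strc 8 2 5 = 0" unfolding strc_u four by simp
lemma [simp]: "strc 8 2 6 = 0" unfolding strc_u four by simp
lemma [simp]: "strc 8 2 7 = 0" unfolding strc_u four by simp
lemma [simp]: "strc 8 3 1 = 0" unfolding strc_u four by simp
lemma [simp]: "strc 8 3 (Suc 0) = 0" unfolding strc_u four by simp
lemma [simp]: "strc 8 3 2 = 0" unfolding strc_u four by simp
lemma [simp]: "strc 8 3 3 = 0" unfolding strc_u four by simp
lemma [simp]: "strc 8 3 4 = 0" unfolding strc_u four by simp
lemma [simp]: "strc 8 3 5 = 0" unfolding strc_u four by simp
lemma [simp]: "strc 8 3 6 = 0" unfolding strc_u four by simp
lemma [simp]: "strc 8 3 7 = 0" unfolding strc_u four by simp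
lemma [simp]: "strc 8 4 1 = 0" unfolding strc_u four by simp
lemma [simp]: "strc 8 4 (Suc 0) = 0" unfolding strc_u four by simp
lemma [simp]: "strc 8 4 2 = 0" unfolding strc_u four by simp
lemma [simp]: "strc 8 4 3 = 0" unfolding strc_u four by simp
lemma [simp]: "strc 8 4 4 = 0" unfolding strc_u four by simp
lemma [simp]: "strc 8 4 5 = 0" unfolding strc_u four by simp
lemma [simp]: "strc 8 4 6 = 0" unfolding strc_u four by simp
lemma [simp]: "strc 8 4 7 = 0" unfolding strc_u four by simp
lemma [simp]: "strc 8 5 1 = -2" unfolding strc_u four by simp
lemma [simp]: "strc 8 5 (Suc 0) = -2" unfolding strc_u four by simp
lemma [simp]: "strc 8 5 2 = 0" unfolding strc_u four by simp
lemma [simp]: "strc 8 5 3 = 0" unfolding strc_u four by simp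
lemma [simp]: "strc 8 5 4 = 0" unfolding strc_u four by simp
lemma [simp]: "strc 8 5 5 = 0" unfolding strc_u four by simp
lemma [simp]: "strc 8 5 6 = 0" unfolding strc_u four by simp
lemma [simp]: "strc 8 5 7 = 0" unfolding strc_u four by simp
lemma [simp]: "strc 8 6 1 = 0" unfolding strc_u four by simp
lemma [simp]: "strc 8 6 (Suc 0) = 0" unfolding strc_u four by simp
lemma [simp]: "strc 8 6 2 = 0" unfolding strc_u four by simp
lemma [simp]: "strc 8 6 3 = 0" unfolding strc_u four by simp
lemma [simp]: "strc 8 6 4 = 0" unfolding strc_u four by simp
lemma [simp]: "strc 8 6 5 = 0" unfolding strc_u four by simp
lemma [simp]: "strc 8 6 6 = 0" unfolding strc_u four by simp
lemma [simp]: "strc 8 6 7 = 0" unfolding strc_u four by simp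
lemma [simp]: "strc 8 7 1 = 0" unfolding strc_u four by simp
lemma [simp]: "strc 8 7 (Suc 0) = 0" unfolding strc_u four by simp
lemma [simp]: "strc 8 7 2 = 0" unfolding strc_u four by simp
lemma [simp]: "strc 8 7 3 = -2" unfolding strc_u four by simp
lemma [simp]: "strc 8 7 4 = 0" unfolding strc_u four by simp
lemma [simp]: "strc 8 7 5 = 0" unfolding strc_u four by simp
lemma [simp]: "strc 8 7 6 = 0" unfolding strc_u four by simp
lemma [simp]: "strc 8 7 7 = 0" unfolding strc_u four by simp
lemma [simp]: "strc 8 8 1 = 0" unfolding strc_u four by simp
lemma [simp]: "strc 8 8 (Suc 0) = 0" unfolding strc_u four by simp
lemma [simp]: "strc 8 8 2 = 0" unfolding strc_u four by simp
lemma [simp]: "strc 8 8 3 = 0" unfolding strc_u four by simp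
lemma [simp]: "strc 8 8 4 = 0" unfolding strc_u four by simp
lemma [simp]: "strc 8 8 5 = 0" unfolding strc_u four by simp
lemma [simp]: "strc 8 8 6 = 0" unfolding strc_u four by simp
lemma [simp]: "strc 8 8 7 = 0" unfolding strc_u four by simp
lemma [simp]: "strc 8 9 1 = 0" unfolding strc_u four by simp
lemma [simp]: "strc 8 9 (Suc 0) = 0" unfolding strc_u four by simp
lemma [simp]: "strc 8 9 2 = 0" unfolding strc_u four by simp
lemma [simp]: "strc 8 9 3 = 0" unfolding strc_u four by simp
lemma [simp]: "strc 8 9 4 = 0" unfolding strc_u four by simp
lemma [simp]: "strc 8 9 5 = 0" unfolding strc_u four by simp
lemma [simp]: "strc 8 9 6 = 0" unfolding strc_u four by simp
lemma [simp]: "strc 8 9 7 = 0" unfolding strc_u four by simp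
lemma [simp]: "strc 8 10 1 = 0" unfolding strc_u four by simp
lemma [simp]: "strc 8 10 (Suc 0) = 0" unfolding strc_u four by simp
lemma [simp]: "strc 8 10 2 = 0" unfolding strc_u four by simp
lemma [simp]: "strc 8 10 3 = 0" unfolding strc_u four by simp
lemma [simp]: "strc 8 10 4 = 0" unfolding strc_u four by simp
lemma [simp]: "strc 8 10 5 = 0" unfolding strc_u four by simp
lemma [simp]: "strc 8 10 6 = 0" unfolding strc_u four by simp
lemma [simp]: "strc 8 10 7 = 0" unfolding strc_u four by simp
lemma [simp]: "strc 9 1 1 = -1" unfolding strc_u four by simp
lemma [simp]: "strc 9 (Suc 0) (Suc 0) = -1" unfolding strc_u four by simp
lemma [simp]: "strc 9 1 2 = 0" unfolding strc_u four by simp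
lemma [simp]: "strc 9 (Suc 0) 2 = 0" unfolding strc_u four by simp
lemma [simp]: "strc 9 1 3 = 0" unfolding strc_u four by simp
lemma [simp]: "strc 9 (Suc 0) 3 = 0" unfolding strc_u four by simp
lemma [simp]: "strc 9 1 4 = 0" unfolding strc_u four by simp
lemma [simp]: "strc 9 (Suc 0) 4 = 0" unfolding strc_u four by simp
lemma [simp]: "strc 9 1 5 = 0" unfolding strc_u four by simp
lemma [simp]: "strc 9 (Suc 0) 5 = 0" unfolding strc_u four by simp
lemma [simp]: "strc 9 1 6 = 0" unfolding strc_u four by simp
lemma [simp]: "strc 9 (Suc 0) 6 = 0" unfolding strc_u four by simp
lemma [simp]: "strc 9 1 7 = 0" unfolding strc_u four by simp
lemma [simp]: "strc 9 (Suc 0) 7 = 0" unfolding strc_u four by simp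
lemma [simp]: "strc 9 2 1 = 0" unfolding strc_u four by simp
lemma [simp]: "strc 9 2 (Suc 0) = 0" unfolding strc_u four by simp
lemma [simp]: "strc 9 2 2 = 0" unfolding strc_u four by simp
lemma [simp]: "strc 9 2 3 = 0" unfolding strc_u four by simp
lemma [simp]: "strc 9 2 4 = 0" unfolding strc_u four by simp
lemma [simp]: "strc 9 2 5 = 0" unfolding strc_u four by simp
lemma [simp]: "strc 9 2 6 = 0" unfolding strc_u four by simp
lemma [simp]: "strc 9 2 7 = 0" unfolding strc_u four by simp
lemma [simp]: "strc 9 3 1 = 0" unfolding strc_u four by simp
lemma [simp]: "strc 9 3 (Suc 0) = 0" unfolding strc_u four by simp
lemma [simp]: "strc 9 3 2 = 0" unfolding strc_u four by simp
lemma [simp]: "strc 9 3 3 = -1" unfolding strc_u four by simp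
lemma [simp]: "strc 9 3 4 = 0" unfolding strc_u four by simp
lemma [simp]: "strc 9 3 5 = 0" unfolding strc_u four by simp
lemma [simp]: "strc 9 3 6 = 0" unfolding strc_u four by simp
lemma [simp]: "strc 9 3 7 = 0" unfolding strc_u four by simp
lemma [simp]: "strc 9 4 1 = 0" unfolding strc_u four by simp
lemma [simp]: "strc 9 4 (Suc 0) = 0" unfolding strc_u four by simp
lemma [simp]: "strc 9 4 2 = 0" unfolding strc_u four by simp
lemma [simp]: "strc 9 4 3 = 0" unfolding strc_u four by simp
lemma [simp]: "strc 9 4 4 = 0" unfolding strc_u four by simp
lemma [simp]: "strc 9 4 5 = 0" unfolding strc_u four by simp
lemma [simp]: "strc 9 4 6 = 0" unfolding strc_u four by simp
lemma [simp]: "strc 9 4 7 = 0" unfolding strc_u four by simp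
lemma [simp]: "strc 9 5 1 = 0" unfolding strc_u four by simp
lemma [simp]: "strc 9 5 (Suc 0) = 0" unfolding strc_u four by simp
lemma [simp]: "strc 9 5 2 = 0" unfolding strc_u four by simp
lemma [simp]: "strc 9 5 3 = 0" unfolding strc_u four by simp
lemma [simp]: "strc 9 5 4 = 0" unfolding strc_u four by simp
lemma [simp]: "strc 9 5 5 = 1" unfolding strc_u four by simp
lemma [simp]: "strc 9 5 6 = 0" unfolding strc_u four by simp
lemma [simp]: "strc 9 5 7 = 0" unfolding strc_u four by simp
lemma [simp]: "strc 9 6 1 = 0" unfolding strc_u four by simp
lemma [simp]: "strc 9 6 (Suc 0) = 0" unfolding strc_u four by simp
lemma [simp]: "strc 9 6 2 = 0" unfolding strc_u four by simp
lemma [simp]: "strc 9 6 3 = 0" unfolding strc_u four by simp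
lemma [simp]: "strc 9 6 4 = 0" unfolding strc_u four by simp
lemma [simp]: "strc 9 6 5 = 0" unfolding strc_u four by simp
lemma [simp]: "strc 9 6 6 = 0" unfolding strc_u four by simp
lemma [simp]: "strc 9 6 7 = 0" unfolding strc_u four by simp
lemma [simp]: "strc 9 7 1 = 0" unfolding strc_u four by simp
lemma [simp]: "strc 9 7 (Suc 0) = 0" unfolding strc_u four by simp
lemma [simp]: "strc 9 7 2 = 0" unfolding strc_u four by simp
lemma [simp]: "strc 9 7 3 = 0" unfolding strc_u four by simp
lemma [simp]: "strc 9 7 4 = 0" unfolding strc_u four by simp
lemma [simp]: "strc 9 7 5 = 0" unfolding strc_u four by simp
lemma [simp]: "strc 9 7 6 = 0" unfolding strc_u four by simp
lemma [simp]: "strc 9 7 7 = 1" unfolding strc_u four by simp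
lemma [simp]: "strc 9 8 1 = 0" unfolding strc_u four by simp
lemma [simp]: "strc 9 8 (Suc 0) = 0" unfolding strc_u four by simp
lemma [simp]: "strc 9 8 2 = 0" unfolding strc_u four by simp
lemma [simp]: "strc 9 8 3 = 0" unfolding strc_u four by simp
lemma [simp]: "strc 9 8 4 = 0" unfolding strc_u four by simp
lemma [simp]: "strc 9 8 5 = 0" unfolding strc_u four by simp
lemma [simp]: "strc 9 8 6 = 0" unfolding strc_u four by simp
lemma [simp]: "strc 9 8 7 = 0" unfolding strc_u four by simp
lemma [simp]: "strc 9 9 1 = 0" unfolding strc_u four by simp
lemma [simp]: "strc 9 9 (Suc 0) = 0" unfolding strc_u four by simp
lemma [simp]: "strc 9 9 2 = 0" unfolding strc_u four by simp
lemma [simp]: "strc 9 9 3 = 0" unfolding strc_u four by simp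
lemma [simp]: "strc 9 9 4 = 0" unfolding strc_u four by simp
lemma [simp]: "strc 9 9 5 = 0" unfolding strc_u four by simp
lemma [simp]: "strc 9 9 6 = 0" unfolding strc_u four by simp
lemma [simp]: "strc 9 9 7 = 0" unfolding strc_u four by simp
lemma [simp]: "strc 9 10 1 = 0" unfolding strc_u four by simp
lemma [simp]: "strc 9 10 (Suc 0) = 0" unfolding strc_u four by simp
lemma [simp]: "strc 9 10 2 = 0" unfolding strc_u four by simp
lemma [simp]: "strc 9 10 3 = 0" unfolding strc_u four by simp
lemma [simp]: "strc 9 10 4 = 0" unfolding strc_u four by simp
lemma [simp]: "strc 9 10 5 = 0" unfolding strc_u four by simp
lemma [simp]: "strc 9 10 6 = 0" unfolding strc_u four by simp
lemma [simp]: "strc 9 10 7 = 0" unfolding strc_u four by simp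
lemma [simp]: "strc 10 1 1 = 0" unfolding strc_u four by simp
lemma [simp]: "strc 10 (Suc 0) (Suc 0) = 0" unfolding strc_u four by simp
lemma [simp]: "strc 10 1 2 = 0" unfolding strc_u four by simp
lemma [simp]: "strc 10 (Suc 0) 2 = 0" unfolding strc_u four by simp
lemma [simp]: "strc 10 1 3 = 0" unfolding strc_u four by simp
lemma [simp]: "strc 10 (Suc 0) 3 = 0" unfolding strc_u four by simp
lemma [simp]: "strc 10 1 4 = 0" unfolding strc_u four by simp
lemma [simp]: "strc 10 (Suc 0) 4 = 0" unfolding strc_u four by simp
lemma [simp]: "strc 10 1 5 = 2" unfolding strc_u four by simp
lemma [simp]: "strc 10 (Suc 0) 5 = 2" unfolding strc_u four by simp
lemma [simp]: "strc 10 1 6 = 0" unfolding strc_u four by simp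
lemma [simp]: "strc 10 (Suc 0) 6 = 0" unfolding strc_u four by simp
lemma [simp]: "strc 10 1 7 = 0" unfolding strc_u four by simp
lemma [simp]: "strc 10 (Suc 0) 7 = 0" unfolding strc_u four by simp
lemma [simp]: "strc 10 2 1 = 0" unfolding strc_u four by simp
lemma [simp]: "strc 10 2 (Suc 0) = 0" unfolding strc_u four by simp
lemma [simp]: "strc 10 2 2 = 0" unfolding strc_u four by simp
lemma [simp]: "strc 10 2 3 = 0" unfolding strc_u four by simp
lemma [simp]: "strc 10 2 4 = 0" unfolding strc_u four by simp
lemma [simp]: "strc 10 2 5 = 0" unfolding strc_u four by simp
lemma [simp]: "strc 10 2 6 = 0" unfolding strc_u four by simp
lemma [simp]: "strc 10 2 7 = 0" unfolding strc_u four by simp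
lemma [simp]: "strc 10 3 1 = 0" unfolding strc_u four by simp
lemma [simp]: "strc 10 3 (Suc 0) = 0" unfolding strc_u four by simp
lemma [simp]: "strc 10 3 2 = 0" unfolding strc_u four by simp
lemma [simp]: "strc 10 3 3 = 0" unfolding strc_u four by simp
lemma [simp]: "strc 10 3 4 = 0" unfolding strc_u four by simp
lemma [simp]: "strc 10 3 5 = 0" unfolding strc_u four by simp
lemma [simp]: "strc 10 3 6 = 0" unfolding strc_u four by simp
lemma [simp]: "strc 10 3 7 = 2" unfolding strc_u four by simp
lemma [simp]: "strc 10 4 1 = 0" unfolding strc_u four by simp
lemma [simp]: "strc 10 4 (Suc 0) = 0" unfolding strc_u four by simp
lemma [simp]: "strc 10 4 2 = 0" unfolding strc_u four by simp
lemma [simp]: "strc 10 4 3 = 0" unfolding strc_u four by simp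
lemma [simp]: "strc 10 4 4 = 0" unfolding strc_u four by simp
lemma [simp]: "strc 10 4 5 = 0" unfolding strc_u four by simp
lemma [simp]: "strc 10 4 6 = 0" unfolding strc_u four by simp
lemma [simp]: "strc 10 4 7 = 0" unfolding strc_u four by simp
lemma [simp]: "strc 10 5 1 = 0" unfolding strc_u four by simp
lemma [simp]: "strc 10 5 (Suc 0) = 0" unfolding strc_u four by simp
lemma [simp]: "strc 10 5 2 = 0" unfolding strc_u four by simp
lemma [simp]: "strc 10 5 3 = 0" unfolding strc_u four by simp
lemma [simp]: "strc 10 5 4 = 0" unfolding strc_u four by simp
lemma [simp]: "strc 10 5 5 = 0" unfolding strc_u four by simp
lemma [simp]: "strc 10 5 6 = 0" unfolding strc_u four by simp
lemma [simp]: "strc 10 5 7 = 0" unfolding strc_u four by simp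
lemma [simp]: "strc 10 6 1 = 0" unfolding strc_u four by simp
lemma [simp]: "strc 10 6 (Suc 0) = 0" unfolding strc_u four by simp
lemma [simp]: "strc 10 6 2 = 0" unfolding strc_u four by simp
lemma [simp]: "strc 10 6 3 = 0" unfolding strc_u four by simp
lemma [simp]: "strc 10 6 4 = 0" unfolding strc_u four by simp
lemma [simp]: "strc 10 6 5 = 0" unfolding strc_u four by simp
lemma [simp]: "strc 10 6 6 = 0" unfolding strc_u four by simp
lemma [simp]: "strc 10 6 7 = 0" unfolding strc_u four by simp
lemma [simp]: "strc 10 7 1 = 0" unfolding strc_u four by simp
lemma [simp]: "strc 10 7 (Suc 0) = 0" unfolding strc_u four by simp
lemma [simp]: "strc 10 7 2 = 0" unfolding strc_u four by simp
lemma [simp]: "strc 10 7 3 = 0" unfolding strc_u four by simp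
lemma [simp]: "strc 10 7 4 = 0" unfolding strc_u four by simp
lemma [simp]: "strc 10 7 5 = 0" unfolding strc_u four by simp
lemma [simp]: "strc 10 7 6 = 0" unfolding strc_u four by simp
lemma [simp]: "strc 10 7 7 = 0" unfolding strc_u four by simp
lemma [simp]: "strc 10 8 1 = 0" unfolding strc_u four by simp
lemma [simp]: "strc 10 8 (Suc 0) = 0" unfolding strc_u four by simp
lemma [simp]: "strc 10 8 2 = 0" unfolding strc_u four by simp
lemma [simp]: "strc 10 8 3 = 0" unfolding strc_u four by simp
lemma [simp]: "strc 10 8 4 = 0" unfolding strc_u four by simp
lemma [simp]: "strc 10 8 5 = 0" unfolding strc_u four by simp
lemma [simp]: "strc 10 8 6 = 0" unfolding strc_u four by simp
lemma [simp]: "strc 10 8 7 = 0" unfolding strc_u four by simp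
lemma [simp]: "strc 10 9 1 = 0" unfolding strc_u four by simp
lemma [simp]: "strc 10 9 (Suc 0) = 0" unfolding strc_u four by simp
lemma [simp]: "strc 10 9 2 = 0" unfolding strc_u four by simp
lemma [simp]: "strc 10 9 3 = 0" unfolding strc_u four by simp
lemma [simp]: "strc 10 9 4 = 0" unfolding strc_u four by simp
lemma [simp]: "strc 10 9 5 = 0" unfolding strc_u four by simp
lemma [simp]: "strc 10 9 6 = 0" unfolding strc_u four by simp
lemma [simp]: "strc 10 9 7 = 0" unfolding strc_u four by simp
lemma [simp]: "strc 10 10 1 = 0" unfolding strc_u four by simp
lemma [simp]: "strc 10 10 (Suc 0) = 0" unfolding strc_u four by simp
lemma [simp]: "strc 10 10 2 = 0" unfolding strc_u four by simp
lemma [simp]: "strc 10 10 3 = 0" unfolding strc_u four by simp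
lemma [simp]: "strc 10 10 4 = 0" unfolding strc_u four by simp
lemma [simp]: "strc 10 10 5 = 0" unfolding strc_u four by simp
lemma [simp]: "strc 10 10 6 = 0" unfolding strc_u four by simp
lemma [simp]: "strc 10 10 7 = 0" unfolding strc_u four by simp



lemma hd_symform:
  assumes "\<And>K. (y K has_derivative Dy K) (at A)" "\<And>K. (z K has_derivative Dz K) (at A)"
  shows "((\<lambda>B. symform gc (\<lambda>K. y K B) (\<lambda>K. z K B)) has_derivative
     (\<lambda>h. symform gc (\<lambda>K. Dy K h) (\<lambda>K. z K A) + symform gc (\<lambda>K. y K A) (\<lambda>K. Dz K h))) (at A)"
  unfolding symform_def odot_def
  apply (rule has_derivative_eq_rhs)
   apply (rule assms | rule derivative_eq_intros | rule refl | simp)+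
  apply (rule ext)
  apply (simp add: sum.distrib[symmetric] algebra_simps add_divide_distrib)
  done

lemma symform_cong: "(\<And>K. K \<in> {1..7} \<Longrightarrow> v K = v' K) \<Longrightarrow> (\<And>K. K \<in> {1..7} \<Longrightarrow> w K = w' K) \<Longrightarrow>
   symform gc v w = symform gc v' w'"
  unfolding symform_def odot_def by (intro sum.cong refl) auto

lemma symform_add1: "symform gc (\<lambda>K. a K + b K) w = symform gc a w + symform gc b w"
  unfolding symform_def odot_def by (simp add: sum.distrib[symmetric] algebra_simps add_divide_distrib)

lemma symform_add2: "symform gc w (\<lambda>K. a K + b K) = symform gc w a + symform gc w b"
  unfolding symform_def odot_def by (simp add: sum.distrib[symmetric] algebra_simps add_divide_distrib)

lemma symform_neg1: "symform gc (\<lambda>K. - a K) w = - symform gc a w"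
  unfolding symform_def odot_def apply (simp add: sum_negf[symmetric])
  apply (intro sum.cong refl)
  apply (simp add: field_simps)
  done

lemma symform_neg2: "symform gc w (\<lambda>K. - a K) = - symform gc w a"
  unfolding symform_def odot_def apply (simp add: sum_negf[symmetric])
  apply (intro sum.cong refl)
  apply (simp add: field_simps)
  done

lemma odot_sum1: "odot m n (\<lambda>K. \<Sum>I\<in>S. c I * f I K) w = (\<Sum>I\<in>S. c I * odot m n (f I) w)"
  unfolding odot_def by (simp add: sum_distrib_left sum_distrib_right sum_divide_distrib sum.distrib[symmetric] algebra_simps)

lemma odot_sum2: "odot m n w (\<lambda>K. \<Sum>I\<in>S. c I * f I K) = (\<Sum>I\<in>S. c I * odot m n w (f I))"
  unfolding odot_def by (simp add: sum_distrib_left sum_distrib_right sum_divide_distrib sum.distrib[symmetric] algebra_simps)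

lemma symform_sum1: "symform gc (\<lambda>K. \<Sum>I\<in>S. c I * f I K) w = (\<Sum>I\<in>S. c I * symform gc (f I) w)"
  unfolding symform_def odot_sum1
  by (simp add: sum_distrib_left algebra_simps sum.swap[of _ S])

lemma symform_sum2: "symform gc w (\<lambda>K. \<Sum>I\<in>S. c I * f I K) = (\<Sum>I\<in>S. c I * symform gc w (f I))"
  unfolding symform_def odot_sum2
  by (simp add: sum_distrib_left algebra_simps sum.swap[of _ S])

lemma eder_gvf:
  assumes "vfield y" "vfield z"
  shows "eder I (gvf gc y z) A = symform gc (\<lambda>K. eder I (y K) A) (\<lambda>K. z K A)
     + symform gc (\<lambda>K. y K A) (\<lambda>K. eder I (z K) A)"
proof -
  have dy: "\<And>K. (y K has_derivative frechet_derivative (y K) (at A)) (at A)"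
    using assms(1) unfolding vfield_def by (simp add: frechet_derivative_works)
  have dz: "\<And>K. (z K has_derivative frechet_derivative (z K) (at A)) (at A)"
    using assms(2) unfolding vfield_def by (simp add: frechet_derivative_works)
  have g: "gvf gc y z = (\<lambda>B. symform gc (\<lambda>K. y K B) (\<lambda>K. z K B))"
    by (rule ext) (simp add: gvf_def)
  have "frechet_derivative (gvf gc y z) (at A) =
     (\<lambda>h. symform gc (\<lambda>K. frechet_derivative (y K) (at A) h) (\<lambda>K. z K A)
        + symform gc (\<lambda>K. y K A) (\<lambda>K. frechet_derivative (z K) (at A) h))"
    unfolding g by (rule frechet_derivative_at[symmetric], rule hd_symform[OF dy dz])
  then show ?thesis unfolding eder_def by simp
qed

lemma lie_red:
  assumes x: "vfield x" "in_Dl x" and y: "vfield y" and z: "vfield z"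
  shows "lie_deriv gc x y z A =
    - symform gc (\<lambda>K. \<Sum>I\<in>{1..10}. \<Sum>J\<in>{1..10}. x I A * y J A * strc I J K) (\<lambda>K. z K A)
    - symform gc (\<lambda>K. y K A) (\<lambda>K. \<Sum>I\<in>{1..10}. \<Sum>J\<in>{1..10}. x I A * z J A * strc I J K)"
proof -
  have x0: "\<And>K. K \<in> {1..7} \<Longrightarrow> x K = (\<lambda>_. 0)"
    using x(2) unfolding in_Dl_def by auto
  have br: "vf_bracket x w K A = (\<Sum>I\<in>{1..10}. x I A * eder I (w K) A)
      + (\<Sum>I\<in>{1..10}. \<Sum>J\<in>{1..10}. x I A * w J A * strc I J K)"
    if "K \<in> {1..7}" for w K
    unfolding vf_bracket_def x0[OF that] eder_def by simp
  define Y where "Y = (\<lambda>K. y K A)"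
  define Z where "Z = (\<lambda>K. z K A)"
  define By where "By = (\<lambda>K. \<Sum>I\<in>{1..10}. \<Sum>J\<in>{1..10}. x I A * y J A * strc I J K)"
  define Bz where "Bz = (\<lambda>K. \<Sum>I\<in>{1..10}. \<Sum>J\<in>{1..10}. x I A * z J A * strc I J K)"
  have e1: "gvf gc (vf_bracket x y) z A = (\<Sum>I\<in>{1..10}. x I A * symform gc (\<lambda>K. eder I (y K) A) Z) + symform gc By Z"
  proof -
    have "gvf gc (vf_bracket x y) z A = symform gc (\<lambda>K. (\<Sum>I\<in>{1..10}. x I A * eder I (y K) A) + By K) Z"
      unfolding gvf_def Z_def By_def by (rule symform_cong) (simp_all add: br)
    then show ?thesis by (simp add: symform_add1 symform_sum1)
  qed
  have e2: "gvf gc y (vf_bracket x z) A = (\<Sum>I\<in>{1..10}. x I A * symform gc Y (\<lambda>K. eder I (z K) A)) + symform gc Y Bz"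
  proof -
    have "gvf gc y (vf_bracket x z) A = symform gc Y (\<lambda>K. (\<Sum>I\<in>{1..10}. x I A * eder I (z K) A) + Bz K)"
      unfolding gvf_def Y_def Bz_def by (rule symform_cong) (simp_all add: br)
    then show ?thesis by (simp add: symform_add2 symform_sum2)
  qed
  have e3: "vf_apply x (gvf gc y z) A = (\<Sum>I\<in>{1..10}. x I A * symform gc (\<lambda>K. eder I (y K) A) Z)
      + (\<Sum>I\<in>{1..10}. x I A * symform gc Y (\<lambda>K. eder I (z K) A))"
    unfolding vf_apply_def eder_gvf[OF y z] Y_def Z_def by (simp add: sum.distrib ring_distribs)
  show ?thesis unfolding lie_deriv_def e1 e2 e3 By_def[symmetric] Bz_def[symmetric] Y_def[symmetric] Z_def[symmetric]
    by simp
qed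


definition Bexp :: "(nat \<Rightarrow> real) \<Rightarrow> (nat \<Rightarrow> real) \<Rightarrow> nat \<Rightarrow> real" where
  "Bexp X Y K = (if K = 1 then -2 * X 8 * Y 5 - X 9 * Y 1
     else if K = 3 then -2 * X 8 * Y 7 - X 9 * Y 3
     else if K = 5 then X 9 * Y 5 + 2 * X 10 * Y 1
     else if K = 7 then X 9 * Y 7 + 2 * X 10 * Y 3 else 0)"

lemma Bsum:
  assumes X: "\<And>I. I \<in> {1..7} \<Longrightarrow> X I = 0" and K: "K \<in> {1..7}"
  shows "(\<Sum>I\<in>{1..10}. \<Sum>J\<in>{1..10}. X I * Y J * strc I J K) = Bexp X Y K"
proof -
  have "(\<Sum>I\<in>{1..10}. \<Sum>J\<in>{1..10}. X I * Y J * strc I J K)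
     = (\<Sum>I\<in>{1..10}. X I * (\<Sum>J\<in>{1..10}. Y J * strc I J K))"
    by (simp add: sum_distrib_left mult.assoc)
  also have "\<dots> = X 8 * (\<Sum>J\<in>{1..10}. Y J * strc 8 J K) + X 9 * (\<Sum>J\<in>{1..10}. Y J * strc 9 J K)
       + X 10 * (\<Sum>J\<in>{1..10}. Y J * strc 10 J K)"
  proof -
    have *: "(\<Sum>I\<in>{1..10}. f I) = f 8 + f 9 + f 10" if "\<And>I. I \<in> {1..7} \<Longrightarrow> f I = 0" for f :: "nat \<Rightarrow> real"
      unfolding ten using that by simp
    show ?thesis by (rule *) (simp add: X)
  qed
  also have "\<dots> = Bexp X Y K"
    using K unfolding seven ten by (auto simp: Bexp_def algebra_simps)
  finally show ?thesis .
qed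

lemma lie_Q:
  assumes x: "vfield x" "in_Dl x" and y: "vfield y" and z: "vfield z"
  shows "lie_deriv gc x y z A =
    - symform gc (Bexp (\<lambda>I. x I A) (\<lambda>K. y K A)) (\<lambda>K. z K A)
    - symform gc (\<lambda>K. y K A) (Bexp (\<lambda>I. x I A) (\<lambda>K. z K A))"
proof -
  have X: "\<And>I. I \<in> {1..7} \<Longrightarrow> x I A = 0" using x(2) unfolding in_Dl_def by auto
  show ?thesis unfolding lie_red[OF x y z]
    by (intro arg_cong2[where f="(-)"] arg_cong[where f=uminus] symform_cong refl)
       (rule Bsum[OF X], assumption | simp)+
qed

lemma symform_expl: "symform gc v w = (\<Sum>\<mu>\<in>{1,2,3,4,5,6,7}. \<Sum>\<nu>\<in>{1,2,3,4,5,6,7}. gc \<mu> \<nu> * odot \<mu> \<nu> v w)"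
  unfolding symform_def seven ..

lemma id_Sp2: "mat 1 \<in> Sp2"
  unfolding Sp2_def by (simp add: transpose_mat matrix_mul_lid matrix_mul_rid)

theorem proposition3p1:
  fixes gc :: "nat \<Rightarrow> nat \<Rightarrow> real"
  assumes sym: "\<forall>\<mu>\<in>{1..7}. \<forall>\<nu>\<in>{1..7}. gc \<mu> \<nu> = gc \<nu> \<mu>"
  shows "(\<forall>x y z. vfield x \<and> in_Dl x \<and> vfield y \<and> vfield z \<longrightarrow>
             (\<forall>A\<in>Sp2. lie_deriv gc x y z A = 0))
         \<longleftrightarrow>
         (\<exists>g22 g24 g44 g35 g26 g46 g66 :: real. \<forall>v w.
             symform gc v w =
               g22 * odot 2 2 v w + 2 * g24 * odot 2 4 v w + g44 * odot 4 4 v w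
               + 2 * g35 * (odot 3 5 v w - odot 1 7 v w) + 2 * g26 * odot 2 6 v w
               + 2 * g46 * odot 4 6 v w + g66 * odot 6 6 v w)"
proof
  assume H: "\<forall>x y z. vfield x \<and> in_Dl x \<and> vfield y \<and> vfield z \<longrightarrow>
             (\<forall>A\<in>Sp2. lie_deriv gc x y z A = 0)"
  have P: "symform gc (Bexp (\<lambda>I. if I = 8 then c8 else if I = 9 then c9 else if I = 10 then c10 else 0) v) w
      + symform gc v (Bexp (\<lambda>I. if I = 8 then c8 else if I = 9 then c9 else if I = 10 then c10 else 0) w) = 0"
    for c8 c9 c10 :: real and v w :: "nat \<Rightarrow> real"
  proof -
    let ?x = "\<lambda>I (_::real^4^4). if I = 8 then c8 else if I = 9 then c9 else if I = 10 then c10 else 0"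
    let ?y = "\<lambda>K (_::real^4^4). v K"
    let ?z = "\<lambda>K (_::real^4^4). w K"
    have "vfield ?x" "vfield ?y" "vfield ?z" unfolding vfield_def by simp_all
    moreover have "in_Dl ?x" unfolding in_Dl_def by auto
    ultimately have "lie_deriv gc ?x ?y ?z (mat 1) = 0" using H id_Sp2 by blast
    then show ?thesis unfolding lie_Q[OF \<open>vfield ?x\<close> \<open>in_Dl ?x\<close> \<open>vfield ?y\<close> \<open>vfield ?z\<close>] by simp
  qed
  have s: "gc 2 1 = gc 1 2" "gc 3 1 = gc 1 3" "gc 4 1 = gc 1 4" "gc 5 1 = gc 1 5" "gc 6 1 = gc 1 6" "gc 7 1 = gc 1 7" "gc 3 2 = gc 2 3" "gc 4 2 = gc 2 4" "gc 5 2 = gc 2 5" "gc 6 2 = gc 2 6" "gc 7 2 = gc 2 7" "gc 4 3 = gc 3 4" "gc 5 3 = gc 3 5" "gc 6 3 = gc 3 6" "gc 7 3 = gc 3 7" "gc 5 4 = gc 4 5" "gc 6 4 = gc 4 6" "gc 7 4 = gc 4 7" "gc 6 5 = gc 5 6" "gc 7 5 = gc 5 7" "gc 7 6 = gc 6 7"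
    by (rule sym[rule_format]; simp)+
  have z_1_1: "gc 1 1 = 0" using P[of 0 1 0 "(\<lambda>K. if K = 1 then 1 else 0)" "(\<lambda>K. if K = 1 then 1 else 0)"] s by (simp add: symform_expl Bexp_def odot_def)
  have z_1_2: "gc 1 2 = 0" using P[of 0 1 0 "(\<lambda>K. if K = 1 then 1 else 0)" "(\<lambda>K. if K = 2 then 1 else 0)"] s by (simp add: symform_expl Bexp_def odot_def)
  have z_1_3: "gc 1 3 = 0" using P[of 0 1 0 "(\<lambda>K. if K = 1 then 1 else 0)" "(\<lambda>K. if K = 3 then 1 else 0)"] s by (simp add: symform_expl Bexp_def odot_def)
  have z_1_4: "gc 1 4 = 0" using P[of 0 1 0 "(\<lambda>K. if K = 1 then 1 else 0)" "(\<lambda>K. if K = 4 then 1 else 0)"] s by (simp add: symform_expl Bexp_def odot_def)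
  have z_1_6: "gc 1 6 = 0" using P[of 0 1 0 "(\<lambda>K. if K = 1 then 1 else 0)" "(\<lambda>K. if K = 6 then 1 else 0)"] s by (simp add: symform_expl Bexp_def odot_def)
  have z_2_3: "gc 2 3 = 0" using P[of 0 1 0 "(\<lambda>K. if K = 2 then 1 else 0)" "(\<lambda>K. if K = 3 then 1 else 0)"] s by (simp add: symform_expl Bexp_def odot_def)
  have z_2_5: "gc 2 5 = 0" using P[of 0 1 0 "(\<lambda>K. if K = 2 then 1 else 0)" "(\<lambda>K. if K = 5 then 1 else 0)"] s by (simp add: symform_expl Bexp_def odot_def)
  have z_2_7: "gc 2 7 = 0" using P[of 0 1 0 "(\<lambda>K. if K = 2 then 1 else 0)" "(\<lambda>K. if K = 7 then 1 else 0)"] s by (simp add: symform_expl Bexp_def odot_def)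
  have z_3_3: "gc 3 3 = 0" using P[of 0 1 0 "(\<lambda>K. if K = 3 then 1 else 0)" "(\<lambda>K. if K = 3 then 1 else 0)"] s by (simp add: symform_expl Bexp_def odot_def)
  have z_3_4: "gc 3 4 = 0" using P[of 0 1 0 "(\<lambda>K. if K = 3 then 1 else 0)" "(\<lambda>K. if K = 4 then 1 else 0)"] s by (simp add: symform_expl Bexp_def odot_def)
  have z_3_6: "gc 3 6 = 0" using P[of 0 1 0 "(\<lambda>K. if K = 3 then 1 else 0)" "(\<lambda>K. if K = 6 then 1 else 0)"] s by (simp add: symform_expl Bexp_def odot_def)
  have z_4_5: "gc 4 5 = 0" using P[of 0 1 0 "(\<lambda>K. if K = 4 then 1 else 0)" "(\<lambda>K. if K = 5 then 1 else 0)"] s by (simp add: symform_expl Bexp_def odot_def)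
  have z_4_7: "gc 4 7 = 0" using P[of 0 1 0 "(\<lambda>K. if K = 4 then 1 else 0)" "(\<lambda>K. if K = 7 then 1 else 0)"] s by (simp add: symform_expl Bexp_def odot_def)
  have z_5_5: "gc 5 5 = 0" using P[of 0 1 0 "(\<lambda>K. if K = 5 then 1 else 0)" "(\<lambda>K. if K = 5 then 1 else 0)"] s by (simp add: symform_expl Bexp_def odot_def)
  have z_5_6: "gc 5 6 = 0" using P[of 0 1 0 "(\<lambda>K. if K = 5 then 1 else 0)" "(\<lambda>K. if K = 6 then 1 else 0)"] s by (simp add: symform_expl Bexp_def odot_def)
  have z_5_7: "gc 5 7 = 0" using P[of 0 1 0 "(\<lambda>K. if K = 5 then 1 else 0)" "(\<lambda>K. if K = 7 then 1 else 0)"] s by (simp add: symform_expl Bexp_def odot_def)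
  have z_6_7: "gc 6 7 = 0" using P[of 0 1 0 "(\<lambda>K. if K = 6 then 1 else 0)" "(\<lambda>K. if K = 7 then 1 else 0)"] s by (simp add: symform_expl Bexp_def odot_def)
  have z_7_7: "gc 7 7 = 0" using P[of 0 1 0 "(\<lambda>K. if K = 7 then 1 else 0)" "(\<lambda>K. if K = 7 then 1 else 0)"] s by (simp add: symform_expl Bexp_def odot_def)
  have z_1_5: "gc 1 5 = 0" using P[of 1 0 0 "(\<lambda>K. if K = 5 then 1 else 0)" "(\<lambda>K. if K = 5 then 1 else 0)"] s by (simp add: symform_expl Bexp_def odot_def)
  have z_3_7: "gc 3 7 = 0" using P[of 1 0 0 "(\<lambda>K. if K = 7 then 1 else 0)" "(\<lambda>K. if K = 7 then 1 else 0)"] s by (simp add: symform_expl Bexp_def odot_def)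
  have z_1_7: "gc 1 7 = - gc 3 5" using P[of 1 0 0 "(\<lambda>K. if K = 5 then 1 else 0)" "(\<lambda>K. if K = 7 then 1 else 0)"] s by (simp add: symform_expl Bexp_def odot_def)
  show "\<exists>g22 g24 g44 g35 g26 g46 g66 :: real. \<forall>v w.
             symform gc v w =
               g22 * odot 2 2 v w + 2 * g24 * odot 2 4 v w + g44 * odot 4 4 v w
               + 2 * g35 * (odot 3 5 v w - odot 1 7 v w) + 2 * g26 * odot 2 6 v w
               + 2 * g46 * odot 4 6 v w + g66 * odot 6 6 v w"
    apply (rule exI[of _ "gc 2 2"], rule exI[of _ "gc 2 4"], rule exI[of _ "gc 4 4"], rule exI[of _ "gc 3 5"],
        rule exI[of _ "gc 2 6"], rule exI[of _ "gc 4 6"], rule exI[of _ "gc 6 6"])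
    apply (intro allI)
    apply (simp add: symform_expl s s[unfolded One_nat_def] z_1_1 z_1_2 z_1_3 z_1_4 z_1_6 z_2_3 z_2_5 z_2_7 z_3_3 z_3_4 z_3_6 z_4_5 z_4_7 z_5_5 z_5_6 z_5_7 z_6_7 z_7_7 z_1_5 z_3_7 z_1_7 z_1_1[unfolded One_nat_def] z_1_2[unfolded One_nat_def] z_1_3[unfolded One_nat_def] z_1_4[unfolded One_nat_def] z_1_6[unfolded One_nat_def] z_1_5[unfolded One_nat_def] z_1_7[unfolded One_nat_def])
    apply (simp add: odot_def algebra_simps)
    apply (simp add: field_simps)
    done
next
  assume "\<exists>g22 g24 g44 g35 g26 g46 g66 :: real. \<forall>v w.
             symform gc v w =
               g22 * odot 2 2 v w + 2 * g24 * odot 2 4 v w + g44 * odot 4 4 v w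
               + 2 * g35 * (odot 3 5 v w - odot 1 7 v w) + 2 * g26 * odot 2 6 v w
               + 2 * g46 * odot 4 6 v w + g66 * odot 6 6 v w"
  then obtain g22 g24 g44 g35 g26 g46 g66 :: real where G: "\<And>v w.
             symform gc v w =
               g22 * odot 2 2 v w + 2 * g24 * odot 2 4 v w + g44 * odot 4 4 v w
               + 2 * g35 * (odot 3 5 v w - odot 1 7 v w) + 2 * g26 * odot 2 6 v w
               + 2 * g46 * odot 4 6 v w + g66 * odot 6 6 v w" by blast
  show "\<forall>x y z. vfield x \<and> in_Dl x \<and> vfield y \<and> vfield z \<longrightarrow>
             (\<forall>A\<in>Sp2. lie_deriv gc x y z A = 0)"
  proof (intro allI impI ballI)
    fix x y z A assume c: "vfield x \<and> in_Dl x \<and> vfield y \<and> vfield z"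
    show "lie_deriv gc x y z A = 0"
      using c by (simp add: lie_Q G odot_def Bexp_def algebra_simps) (simp add: field_simps)
  qed
qed

end
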